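(* Let $x_0\in\mathbb{R}^n$, $A\in\mathbb{R}^{n\times n}$, $C\in\mathbb{R}^{1\times n}$ and $\mathbf{y}\in\mathbb{R}[\mathfrak{q},\mathfrak{q}^*]$. If $$w=(Cx_0,\ CAx_0,\ CA^2x_0,\ \ldots)\in\ell_{2+},$$ then there exist $m\in\mathbb{N}$, $\bar x_0\in\mathbb{R}^m$, $\bar A\in\mathbb{R}^{m\times m}$ and $\bar C\in\mathbb{R}^{1\times m}$ such that $$\mathbf{y}w=(\bar C\bar x_0,\ \bar C\bar A\bar x_0,\ \bar C\bar A^2\bar x_0,\ \ldots)\in\ell_{2+}.$$
   Context: $\ell_{2+}$ is the space of square-summable real sequences $(y[0],y[1],\ldots)$. The forward shift is $\mathfrak{q}:(y[0],y[1],\ldots)\mapsto(y[1],y[2],\ldots)$ and its adjoint is $\mathfrak{q}^*:(y[0],y[1],\ldots)\mapsto(0,y[0],y[1],\ldots)$. $\mathbb{R}[\mathfrak{q},\mathfrak{q}^*]=\{\sum_{i=0}^{N-1}\sum_{j=0}^{N-1}\alpha_{ij}(\mathfrak{q}^* )^i\mathfrak{q}^j : N\in\mathbb{N},\ \alpha_{ij}\in\mathbb{R}\}$, operators acting on $\ell_{2+}$. *)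

theory Defs
  imports "HOL-Analysis.Analysis"
begin

definition in_l2p :: "(nat \<Rightarrow> real) \<Rightarrow> bool" where
  "in_l2p y \<longleftrightarrow> summable (\<lambda>k. (y k)\<^sup>2)"

definition fshift :: "(nat \<Rightarrow> real) \<Rightarrow> (nat \<Rightarrow> real)" where
  "fshift y = (\<lambda>k. y (Suc k))"

definition bshift :: "(nat \<Rightarrow> real) \<Rightarrow> (nat \<Rightarrow> real)" where
  "bshift y = (\<lambda>k. if k = 0 then 0 else y (k - 1))"

definition qpoly_ops :: "((nat \<Rightarrow> real) \<Rightarrow> (nat \<Rightarrow> real)) set" where
  "qpoly_ops = {Y. \<exists>(N::nat) (\<alpha>::nat \<Rightarrow> nat \<Rightarrow> real).
      Y = (\<lambda>y k. \<Sum>i<N. \<Sum>j<N. \<alpha> i j * ((bshift ^^ i) ((fshift ^^ j) y)) k)}"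

text \<open>Output sequence k \<mapsto> C A^k x0 for a system of state dimension m,
  with matrices/vectors given by their entries at indices below m.\<close>
definition mat_vec_n :: "nat \<Rightarrow> (nat \<Rightarrow> nat \<Rightarrow> real) \<Rightarrow> (nat \<Rightarrow> real) \<Rightarrow> (nat \<Rightarrow> real)" where
  "mat_vec_n m A x = (\<lambda>i. \<Sum>j<m. A i j * x j)"

definition sys_output :: "nat \<Rightarrow> (nat \<Rightarrow> real) \<Rightarrow> (nat \<Rightarrow> nat \<Rightarrow> real) \<Rightarrow> (nat \<Rightarrow> real) \<Rightarrow> (nat \<Rightarrow> real)" where
  "sys_output m x0 A C = (\<lambda>k. \<Sum>i<m. C i * ((mat_vec_n m A ^^ k) x0) i)"

end

theory Submission
  imports Defs
begin

lemma sum_split_add: "(\<Sum>j<a+b. g j) = (\<Sum>j<a. g j) + (\<Sum>j<b. g (a+j)) " for g :: "nat \<Rightarrow> real"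
  by (induction b) (auto simp: add.assoc)

definition realz :: "(nat \<Rightarrow> real) \<Rightarrow> bool" where
  "realz w \<longleftrightarrow> (\<exists>m x A C. w = sys_output m x A C)"

lemma mv_app: "mat_vec_n m A x i = (\<Sum>j<m. A i j * x j)"
  by (simp add: mat_vec_n_def)

lemma mv_cong: "(\<And>j. j < m \<Longrightarrow> v j = v' j) \<Longrightarrow> mat_vec_n m A v i = mat_vec_n m A v' i"
  unfolding mat_vec_n_def by (rule sum.cong) auto

lemma realz_zero: "realz (\<lambda>k. 0)"
  unfolding realz_def sys_output_def by (rule exI[of _ 0]) auto

lemma realz_scale: "realz w \<Longrightarrow> realz (\<lambda>k. c * w k)"
  unfolding realz_def sys_output_def
proof -
  assume "\<exists>m x A C. w = (\<lambda>k. \<Sum>i<m. C i * (mat_vec_n m A ^^ k) x i)"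
  then obtain m x A C where w: "w = (\<lambda>k. \<Sum>i<m. C i * (mat_vec_n m A ^^ k) x i)" by blast
  show "\<exists>m x A C. (\<lambda>k. c * w k) = (\<lambda>k. \<Sum>i<m. C i * (mat_vec_n m A ^^ k) x i)"
    by (rule exI[of _ m], rule exI[of _ x], rule exI[of _ A], rule exI[of _ "\<lambda>i. c * C i"])
      (simp add: w sum_distrib_left mult.assoc)
qed

lemma realz_fshift: "realz w \<Longrightarrow> realz (fshift w)"
  unfolding realz_def sys_output_def fshift_def
proof -
  assume "\<exists>m x A C. w = (\<lambda>k. \<Sum>i<m. C i * (mat_vec_n m A ^^ k) x i)"
  then obtain m x A C where w: "w = (\<lambda>k. \<Sum>i<m. C i * (mat_vec_n m A ^^ k) x i)" by blast
  show "\<exists>m x A C. (\<lambda>k. w (Suc k)) = (\<lambda>k. \<Sum>i<m. C i * (mat_vec_n m A ^^ k) x i)"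
    by (rule exI[of _ m], rule exI[of _ "mat_vec_n m A x"], rule exI[of _ A], rule exI[of _ C])
      (simp add: w funpow_Suc_right del: funpow.simps)
qed

lemma realz_add: "realz w1 \<Longrightarrow> realz w2 \<Longrightarrow> realz (\<lambda>k. w1 k + w2 k)"
proof -
  assume "realz w1" "realz w2"
  then obtain m1 x1 A1 C1 m2 x2 A2 C2 where w1: "w1 = sys_output m1 x1 A1 C1"
    and w2: "w2 = sys_output m2 x2 A2 C2" unfolding realz_def by blast
  define x where "x i = (if i < m1 then x1 i else x2 (i - m1))" for i
  define A where "A i j = (if i < m1 then (if j < m1 then A1 i j else 0)
     else (if j < m1 then 0 else A2 (i-m1) (j-m1)))" for i j
  define C where "C i = (if i < m1 then C1 i else C2 (i - m1))" for i
  have key: "\<forall>i<m1+m2. (mat_vec_n (m1+m2) A ^^ k) x i =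
     (if i < m1 then (mat_vec_n m1 A1 ^^ k) x1 i else (mat_vec_n m2 A2 ^^ k) x2 (i - m1))" for k
  proof (induction k)
    case 0
    then show ?case by (simp add: x_def)
  next
    case (Suc k)
    show ?case
    proof (intro allI impI)
      fix i assume i: "i < m1 + m2"
      let ?v = "(mat_vec_n (m1+m2) A ^^ k) x"
      have "(mat_vec_n (m1+m2) A ^^ Suc k) x i = (\<Sum>j<m1+m2. A i j * ?v j)"
        by (simp add: mat_vec_n_def)
      also have "\<dots> = (\<Sum>j<m1. A i j * ?v j) + (\<Sum>j<m2. A i (m1+j) * ?v (m1+j))"
        by (rule sum_split_add)
      also have "\<dots> = (if i < m1 then (mat_vec_n m1 A1 ^^ Suc k) x1 i else (mat_vec_n m2 A2 ^^ Suc k) x2 (i - m1))"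
      proof -
        have h1: "\<And>j. j<m1 \<Longrightarrow> ?v j = (mat_vec_n m1 A1 ^^ k) x1 j" using Suc.IH by auto
        have h2: "\<And>j. j<m2 \<Longrightarrow> ?v (m1+j) = (mat_vec_n m2 A2 ^^ k) x2 j" using Suc.IH by auto
        show ?thesis using i by (auto simp: A_def mv_app h1 h2 intro!: sum.cong)
      qed
      finally show "(mat_vec_n (m1+m2) A ^^ Suc k) x i = (if i < m1 then (mat_vec_n m1 A1 ^^ Suc k) x1 i else (mat_vec_n m2 A2 ^^ Suc k) x2 (i - m1))" .
    qed
  qed
  have "(\<lambda>k. w1 k + w2 k) = sys_output (m1+m2) x A C"
  proof
    fix k
    have "sys_output (m1+m2) x A C k = (\<Sum>i<m1. C i * (mat_vec_n (m1+m2) A ^^ k) x i)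
       + (\<Sum>i<m2. C (m1+i) * (mat_vec_n (m1+m2) A ^^ k) x (m1+i))"
      unfolding sys_output_def by (rule sum_split_add)
    also have "\<dots> = w1 k + w2 k"
      using key[of k] by (auto simp: w1 w2 sys_output_def C_def intro!: sum.cong)
    finally show "w1 k + w2 k = sys_output (m1+m2) x A C k" by simp
  qed
  then show ?thesis unfolding realz_def by blast
qed

lemma realz_bshift: "realz w \<Longrightarrow> realz (bshift w)"
proof -
  assume "realz w"
  then obtain m x0 A C where w: "w = sys_output m x0 A C" unfolding realz_def by blast
  define x where "x i = (if i = m then 1 else 0::real)" for i
  define A' where "A' i j = (if i < m then (if j < m then A i j else x0 i) else 0)" for i j
  define C' where "C' i = (if i < m then C i else 0)" for i
  have key: "\<forall>i\<le>m. (mat_vec_n (Suc m) A' ^^ Suc k) x i =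
     (if i < m then (mat_vec_n m A ^^ k) x0 i else 0)" for k
  proof (induction k)
    case 0
    show ?case
    proof (intro allI impI)
      fix i assume "i \<le> m"
      have "(mat_vec_n (Suc m) A' ^^ Suc 0) x i = (\<Sum>j<m. A' i j * x j) + A' i m * x m"
        by (simp add: mat_vec_n_def)
      also have "\<dots> = (if i < m then (mat_vec_n m A ^^ 0) x0 i else 0)"
        by (simp add: x_def A'_def)
      finally show "(mat_vec_n (Suc m) A' ^^ Suc 0) x i = (if i < m then (mat_vec_n m A ^^ 0) x0 i else 0)" .
    qed
  next
    case (Suc k)
    show ?case
    proof (intro allI impI)
      fix i assume "i \<le> m"
      let ?v = "(mat_vec_n (Suc m) A' ^^ Suc k) x"
      have "(mat_vec_n (Suc m) A' ^^ Suc (Suc k)) x i = (\<Sum>j<m. A' i j * ?v j) + A' i m * ?v m"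
        by (simp add: mv_app)
      also have "\<dots> = (if i < m then (mat_vec_n m A ^^ Suc k) x0 i else 0)"
      proof -
        have h1: "\<And>j. j<m \<Longrightarrow> ?v j = (mat_vec_n m A ^^ k) x0 j" using Suc.IH by auto
        have h2: "?v m = 0" using Suc.IH by auto
        have e: "(\<Sum>j<m. A' i j * ?v j) = (\<Sum>j<m. A' i j * (mat_vec_n m A ^^ k) x0 j)"
          by (rule sum.cong[OF refl]) (metis h1 lessThan_iff)
        show ?thesis unfolding e h2 by (auto simp: A'_def mv_app intro!: sum.cong)
      qed
      finally show "(mat_vec_n (Suc m) A' ^^ Suc (Suc k)) x i = (if i < m then (mat_vec_n m A ^^ Suc k) x0 i else 0)" .
    qed
  qed
  have "bshift w = sys_output (Suc m) x A' C'"
  proof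
    fix k
    show "bshift w k = sys_output (Suc m) x A' C' k"
    proof (cases k)
      case 0
      then show ?thesis by (simp add: bshift_def sys_output_def C'_def x_def)
    next
      case (Suc k')
      have "sys_output (Suc m) x A' C' k = (\<Sum>i<m. C' i * (mat_vec_n (Suc m) A' ^^ Suc k') x i)"
        by (simp add: sys_output_def C'_def Suc)
      also have "\<dots> = w k'"
        using key[of k'] by (auto simp: w sys_output_def C'_def intro!: sum.cong)
      finally show ?thesis by (simp add: bshift_def Suc)
    qed
  qed
  then show ?thesis unfolding realz_def by blast
qed

lemma realz_vec:
  fixes x0 :: "real ^ 'n" and A :: "real ^ 'n ^ 'n" and C :: "real ^ 'n"
  shows "realz (\<lambda>k. C \<bullet> (((\<lambda>v. A *v v) ^^ k) x0))"
proof -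
  obtain f :: "nat \<Rightarrow> 'n" where f: "bij_betw f {..<CARD('n)} UNIV"
    using ex_bij_betw_nat_finite[of "UNIV :: 'n set"] by (auto simp: atLeast0LessThan)
  define m where "m = CARD('n)"
  define xb where "xb i = x0 $ f i" for i
  define Ab where "Ab i j = A $ f i $ f j" for i j
  define Cb where "Cb i = C $ f i" for i
  have key: "\<forall>i<m. (mat_vec_n m Ab ^^ k) xb i = (((\<lambda>v. A *v v) ^^ k) x0) $ f i" for k
  proof (induction k)
    case 0 then show ?case by (simp add: xb_def)
  next
    case (Suc k)
    show ?case
    proof (intro allI impI)
      fix i assume "i < m"
      let ?u = "((\<lambda>v. A *v v) ^^ k) x0"
      have h1: "\<And>j. j<m \<Longrightarrow> (mat_vec_n m Ab ^^ k) xb j = ?u $ f j" using Suc.IH by auto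
      have "(mat_vec_n m Ab ^^ Suc k) xb i = (\<Sum>j<m. A $ f i $ f j * ?u $ f j)"
        by (auto simp: mv_app Ab_def h1 intro!: sum.cong)
      also have "\<dots> = (\<Sum>j\<in>UNIV. A $ f i $ j * ?u $ j)"
        using sum.reindex_bij_betw[OF f, of "\<lambda>j. A $ f i $ j * ?u $ j"] by (simp add: m_def)
      also have "\<dots> = (A *v ?u) $ f i" by (simp add: matrix_vector_mult_def)
      finally show "(mat_vec_n m Ab ^^ Suc k) xb i = (((\<lambda>v. A *v v) ^^ Suc k) x0) $ f i" by simp
    qed
  qed
  have "(\<lambda>k. C \<bullet> (((\<lambda>v. A *v v) ^^ k) x0)) = sys_output m xb Ab Cb"
  proof
    fix k
    let ?u = "((\<lambda>v. A *v v) ^^ k) x0"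
    have "sys_output m xb Ab Cb k = (\<Sum>i<m. C $ f i * ?u $ f i)"
      using key[of k] by (auto simp: sys_output_def Cb_def intro!: sum.cong)
    also have "\<dots> = (\<Sum>j\<in>UNIV. C $ j * ?u $ j)"
      using sum.reindex_bij_betw[OF f, of "\<lambda>j. C $ j * ?u $ j"] by (simp add: m_def)
    also have "\<dots> = C \<bullet> ?u" by (simp add: inner_vec_def)
    finally show "C \<bullet> ?u = sys_output m xb Ab Cb k" by simp
  qed
  then show ?thesis unfolding realz_def by blast
qed

lemma l2_zero: "in_l2p (\<lambda>k. 0)" by (simp add: in_l2p_def)

lemma l2_scale: "in_l2p w \<Longrightarrow> in_l2p (\<lambda>k. c * w k)"
  unfolding in_l2p_def by (simp add: power_mult_distrib summable_mult)

lemma l2_add: "in_l2p w1 \<Longrightarrow> in_l2p w2 \<Longrightarrow> in_l2p (\<lambda>k. w1 k + w2 k)"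
  unfolding in_l2p_def
proof -
  assume a: "summable (\<lambda>k. (w1 k)\<^sup>2)" "summable (\<lambda>k. (w2 k)\<^sup>2)"
  have s: "summable (\<lambda>k. 2 * (w1 k)\<^sup>2 + 2 * (w2 k)\<^sup>2)"
    using a by (intro summable_add summable_mult)
  show "summable (\<lambda>k. (w1 k + w2 k)\<^sup>2)"
  proof (rule summable_comparison_test[OF _ s], intro exI allI impI)
    fix k
    have "0 \<le> (w1 k - w2 k)\<^sup>2" by simp
    have "norm ((w1 k + w2 k)\<^sup>2) = (w1 k + w2 k)\<^sup>2" by simp
    also have "\<dots> \<le> 2 * (w1 k)\<^sup>2 + 2 * (w2 k)\<^sup>2"
      using \<open>0 \<le> (w1 k - w2 k)\<^sup>2\<close> by (simp add: power2_eq_square algebra_simps)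
    finally show "norm ((w1 k + w2 k)\<^sup>2) \<le> 2 * (w1 k)\<^sup>2 + 2 * (w2 k)\<^sup>2" .
  qed
qed

lemma l2_fshift: "in_l2p w \<Longrightarrow> in_l2p (fshift w)"
  unfolding in_l2p_def fshift_def using summable_Suc_iff[of "\<lambda>k. (w k)\<^sup>2"] by simp

lemma l2_bshift: "in_l2p w \<Longrightarrow> in_l2p (bshift w)"
  unfolding in_l2p_def bshift_def
  using summable_Suc_iff[of "\<lambda>k. (if k = 0 then 0 else w (k - 1))\<^sup>2"] by simp

definition good where "good w \<longleftrightarrow> realz w \<and> in_l2p w"

lemma good_sum: "(\<And>i. i < (N::nat) \<Longrightarrow> good (f i)) \<Longrightarrow> good (\<lambda>k. \<Sum>i<N. f i k)"
proof (induction N)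
  case 0 then show ?case by (simp add: good_def realz_zero l2_zero)
next
  case (Suc N)
  then have "good (\<lambda>k. \<Sum>i<N. f i k)" "good (f N)" by auto
  then show ?case by (simp add: good_def realz_add l2_add)
qed

lemma good_fshift_pow: "good w \<Longrightarrow> good ((fshift ^^ j) w)"
  by (induction j) (auto simp: good_def realz_fshift l2_fshift)

lemma good_bshift_pow: "good w \<Longrightarrow> good ((bshift ^^ j) w)"
  by (induction j) (auto simp: good_def realz_bshift l2_bshift)

theorem lemma1:
  fixes x0 :: "real ^ 'n" and A :: "real ^ 'n ^ 'n" and C :: "real ^ 'n"
    and Y :: "(nat \<Rightarrow> real) \<Rightarrow> (nat \<Rightarrow> real)"
  assumes "Y \<in> qpoly_ops"
    and "in_l2p (\<lambda>k. C \<bullet> (((\<lambda>v. A *v v) ^^ k) x0))"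
  shows "\<exists>(m::nat) (xb0::nat \<Rightarrow> real) (Ab::nat \<Rightarrow> nat \<Rightarrow> real) (Cb::nat \<Rightarrow> real).
           Y (\<lambda>k. C \<bullet> (((\<lambda>v. A *v v) ^^ k) x0)) = sys_output m xb0 Ab Cb
         \<and> in_l2p (sys_output m xb0 Ab Cb)"
proof -
  let ?w = "\<lambda>k. C \<bullet> (((\<lambda>v. A *v v) ^^ k) x0)"
  obtain N \<alpha> where Y: "Y = (\<lambda>y k. \<Sum>i<N. \<Sum>j<N. \<alpha> i j * ((bshift ^^ i) ((fshift ^^ j) y)) k)"
    using assms(1) unfolding qpoly_ops_def by blast
  have gw: "good ?w" using assms(2) realz_vec by (simp add: good_def)
  have "good (Y ?w)"
    unfolding Y
    by (intro good_sum) (simp add: good_def realz_scale l2_scale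
        good_bshift_pow[OF good_fshift_pow[OF gw], unfolded good_def])
  then show ?thesis unfolding good_def realz_def by metis
qed

end
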